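(* For every $n\ge1$, the restriction of the map $\Phi$ to alternating permutations of $[2n]$ (i.e. permutations $\pi_1\cdots\pi_{2n}$ of $[2n]$, all entries positive, with $\pi_1>\pi_2<\pi_3>\cdots>\pi_{2n}$) is a bijection onto the set of labeled Dyck paths of length $2n$ (labeled ballot paths of length $2n$ ending on the $x$-axis); equivalently the inverse map $\Phi^{-1}$ sends labeled Dyck paths of length $2n$ to snakes with no negative entries. Consequently $B(2n,0)=E_{2n}$, the number of alternating permutations of $[2n]$.
   Context: A signed permutation of $[n]$ is a permutation of $[n]$ with some entries negated ($\bar i=-i$), ordered by $\bar n<\cdots<\bar1<1<\cdots<n$; a snake of type $B_n$ is one with $0<\pi_1>\pi_2<\pi_3>\cdots\pi_n$. A labeled ballot path $(P;W)$, $P=p_1\cdots p_n$, $W=w_1\cdots w_n$, is a lattice path from $(0,0)$ with steps $u=(1,1)$, $d=(1,-1)$ never going below the $x$-axis, with integer labels $0\le w_i\le$ height of $p_i$, the height of a step being the smaller $y$-coordinate of its endpoints. $B(n,k)$ counts labeled ballot paths ending at $(n,k)$. Inversion code: for a snake $\pi$ of type $B_n$ and $1\le i\le n$, if $n$ is odd let $c_i(\pi)$ be the number of $k$ with $1\le k\le (n-1)/2$, $i<2k$ and $\pi_{2k}<\pi_i<\pi_{2k+1}$; if $n$ is even let $c_i(\pi)$ be the number of $k$ with $1\le k\le n/2$, $i<2k-1$ and $\pi_{2k}<\pi_i<\pi_{2k-1}$. The map $\Phi$ (a bijection from snakes of type $B_n$ to labeled ballot paths of length $n$): for $k=1,\dots,n$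 let $i$ be the position with $\pi_i\in\{n-k+1,\overline{n-k+1}\}$. If $\pi_i=n-k+1$, set $p_k=u$ if $i$ is odd and $p_k=d$ if $i$ is even, and $w_k=c_i(\pi)$. If $\pi_i=\overline{n-k+1}$, set $p_k=d$ if $i$ is odd and $p_k=u$ if $i$ is even, and $w_k=h_k-c_i(\pi)$ where $h_k$ is the height of the $k$-th step in $p_1\cdots p_k$. Then $\Phi(\pi)=(p_1\cdots p_n;w_1\cdots w_n)$. *)

theory Defs
  imports Main
begin

(* Conventions: a (signed) permutation of [n] is a list xs :: int list of length n;
   positions are 1-indexed via pe xs i = xs ! (i - 1).  The order
   \bar n < ... < \bar 1 < 1 < ... < n is the usual order on int. *)

definition pe :: "int list \<Rightarrow> nat \<Rightarrow> int" where
  "pe xs i = xs ! (i - 1)"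

definition signed_perm :: "nat \<Rightarrow> int list \<Rightarrow> bool" where
  "signed_perm n xs \<longleftrightarrow> length xs = n \<and> distinct (map abs xs) \<and>
     set (map abs xs) = {1..int n}"

definition snakeB :: "nat \<Rightarrow> int list \<Rightarrow> bool" where
  "snakeB n xs \<longleftrightarrow> signed_perm n xs \<and> (n \<ge> 1 \<longrightarrow> 0 < pe xs 1) \<and>
     (\<forall>i. 1 \<le> i \<and> i < n \<longrightarrow>
        (if odd i then pe xs i > pe xs (Suc i) else pe xs i < pe xs (Suc i)))"

definition alt_perm :: "nat \<Rightarrow> int list \<Rightarrow> bool" where
  "alt_perm m xs \<longleftrightarrow> length xs = m \<and> distinct xs \<and> set xs = {1..int m} \<and>
     (\<forall>i. 1 \<le> i \<and> i < m \<longrightarrow>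
        (if odd i then pe xs i > pe xs (Suc i) else pe xs i < pe xs (Suc i)))"

(* Paths: list of steps, True = u = (1,1), False = d = (1,-1). *)
definition ypos :: "bool list \<Rightarrow> nat \<Rightarrow> int" where
  "ypos P j = (\<Sum>s\<leftarrow>take j P. if s then 1 else -1)"

definition step_height :: "bool list \<Rightarrow> nat \<Rightarrow> int" where
  "step_height P k = min (ypos P (k - 1)) (ypos P k)"

definition labeled_ballot :: "nat \<Rightarrow> int \<Rightarrow> bool list \<times> int list \<Rightarrow> bool" where
  "labeled_ballot m e PW \<longleftrightarrow> (case PW of (P, W) \<Rightarrow>
     length P = m \<and> length W = m \<and> (\<forall>j \<le> m. ypos P j \<ge> 0) \<and>
     (\<forall>k. 1 \<le> k \<and> k \<le> m \<longrightarrow> 0 \<le> W ! (k - 1) \<and> W ! (k - 1) \<le> step_height P k) \<and>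
     ypos P m = e)"

definition labeled_ballot_any :: "nat \<Rightarrow> bool list \<times> int list \<Rightarrow> bool" where
  "labeled_ballot_any m PW \<longleftrightarrow> (\<exists>e. labeled_ballot m e PW)"

definition B :: "nat \<Rightarrow> int \<Rightarrow> nat" where
  "B m e = card {PW. labeled_ballot m e PW}"

definition Euler_E :: "nat \<Rightarrow> nat" where
  "Euler_E m = card {xs. alt_perm m xs}"

definition inv_code :: "int list \<Rightarrow> nat \<Rightarrow> nat" where
  "inv_code xs i = (let n = length xs in
     if odd n then card {k. 1 \<le> k \<and> k \<le> (n - 1) div 2 \<and> i < 2 * k \<and>
                          pe xs (2 * k) < pe xs i \<and> pe xs i < pe xs (2 * k + 1)}
     else card {k. 1 \<le> k \<and> k \<le> n div 2 \<and> i < 2 * k - 1 \<and>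
                          pe xs (2 * k) < pe xs i \<and> pe xs i < pe xs (2 * k - 1)})"

definition posk :: "int list \<Rightarrow> nat \<Rightarrow> nat" where
  "posk xs k = (THE i. 1 \<le> i \<and> i \<le> length xs \<and> \<bar>pe xs i\<bar> = int (length xs - k + 1))"

definition Phi_step :: "int list \<Rightarrow> nat \<Rightarrow> bool" where
  "Phi_step xs k = (let i = posk xs k in (0 < pe xs i) = odd i)"

definition Phi_path :: "int list \<Rightarrow> bool list" where
  "Phi_path xs = map (Phi_step xs) [1..<Suc (length xs)]"

definition Phi_label :: "int list \<Rightarrow> nat \<Rightarrow> int" where
  "Phi_label xs k = (let i = posk xs k in
     if 0 < pe xs i then int (inv_code xs i)
     else step_height (take k (Phi_path xs)) k - int (inv_code xs i))"

definition Phi :: "int list \<Rightarrow> bool list \<times> int list" where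
  "Phi xs = (Phi_path xs, map (Phi_label xs) [1..<Suc (length xs)])"

end

theory Submission
  imports Defs
begin


type_synonym st = "(int \<times> int) list"

definition nopen :: "st \<Rightarrow> nat" where
  "nopen S = length (filter (\<lambda>p. snd p = 0) S)"

definition rt :: "int \<Rightarrow> st \<Rightarrow> st" where
  "rt t S = map (\<lambda>p. (fst p, if snd p > t then snd p else 0)) (filter (\<lambda>p. fst p > t) S)"

fun ins :: "nat \<Rightarrow> int \<times> int \<Rightarrow> st \<Rightarrow> st" where
  "ins c x [] = [x]"
| "ins c x (y#ys) = (if nopen (y#ys) \<le> c then x#y#ys else y # ins c x ys)"

fun cls :: "nat \<Rightarrow> int \<Rightarrow> st \<Rightarrow> st" where
  "cls c t [] = []"
| "cls c t (y#ys) = (if snd y = 0 \<and> nopen ys = c then (fst y, t)#ys else y # cls c t ys)"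

fun chn :: "st \<Rightarrow> bool" where
  "chn [] = True"
| "chn [p] = (snd p < fst p)"
| "chn (p#q#r) = (snd p < fst p \<and> snd p < fst q \<and> chn (q#r))"

fun prs :: "int list \<Rightarrow> st" where
  "prs (a#b#r) = (a,b) # prs r"
| "prs _ = []"

fun flat :: "st \<Rightarrow> int list" where
  "flat [] = []"
| "flat (p#r) = fst p # snd p # flat r"

lemma nopen_simps[simp]: "nopen [] = 0" "nopen (y#ys) = (if snd y = 0 then Suc (nopen ys) else nopen ys)"
  "nopen (xs @ ys) = nopen xs + nopen ys"
  by (auto simp: nopen_def)

lemma rt_simps[simp]: "rt t [] = []"
  "rt t (p#S) = (if fst p > t then (fst p, if snd p > t then snd p else 0) # rt t S else rt t S)"
  "rt t (S @ S') = rt t S @ rt t S'"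
  by (auto simp: rt_def)

lemma chn_Cons: "chn (x # zs) = (snd x < fst x \<and> (zs \<noteq> [] \<longrightarrow> snd x < fst (hd zs)) \<and> chn zs)"
  by (cases zs) auto

lemma chn_append: "chn (xs @ ys) = (chn xs \<and> chn ys \<and> (xs \<noteq> [] \<longrightarrow> ys \<noteq> [] \<longrightarrow> snd (last xs) < fst (hd ys)))"
  by (induction xs) (auto simp: chn_Cons)

lemma prs_flat[simp]: "prs (flat S) = S"
  by (induction S) auto

lemma flat_prs: "even (length xs) \<Longrightarrow> flat (prs xs) = xs"
  by (induction xs rule: prs.induct) auto

lemma length_flat[simp]: "length (flat S) = 2 * length S"
  by (induction S) auto

lemma length_prs: "length (prs xs) = length xs div 2"
  by (induction xs rule: prs.induct) auto

lemma ins_decomp: "\<exists>L R. S = L @ R \<and> ins c x S = L @ x # R \<and> (L \<noteq> [] \<longrightarrow> snd (last L) = 0)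
   \<and> nopen R = min c (nopen S)"
proof (induction S)
  case Nil then show ?case by auto
next
  case (Cons y ys)
  show ?case
  proof (cases "nopen (y#ys) \<le> c")
    case True then show ?thesis by (intro exI[of _ "[]"] exI[of _ "y#ys"]) auto
  next
    case False
    from Cons.IH obtain L R where h: "ys = L @ R" "ins c x ys = L @ x # R"
      "L \<noteq> [] \<longrightarrow> snd (last L) = 0" "nopen R = min c (nopen ys)" by blast
    have 1: "nopen R = min c (nopen (y # ys))"
    proof (cases "snd y = 0")
      case True
      then show ?thesis using h(4) False by (simp add: min_def)
    next
      case F: False
      then show ?thesis using h(4) False by (simp add: min_def)
    qed
    have 2: "y # L \<noteq> [] \<longrightarrow> snd (last (y # L)) = 0"
    proof (cases "L = []")
      case True
      then have "R = ys" using h by simp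
      then have "nopen ys \<le> c" using h(4) by (simp add: min_def split: if_splits)
      then have "snd y = 0" using False by (auto split: if_splits)
      then show ?thesis using True by simp
    next
      case F: False
      then show ?thesis using h(3) by simp
    qed
    have 3: "y # ys = (y # L) @ R" using h(1) by simp
    have 4: "ins c x (y # ys) = (y # L) @ x # R" using h(2) False by simp
    show ?thesis using 1 2 3 4 by blast
  qed
qed

lemma cls_decomp: "c < nopen S \<Longrightarrow> \<exists>L y R. S = L @ y # R \<and> snd y = 0 \<and> nopen R = c
   \<and> cls c t S = L @ (fst y, t) # R"
proof (induction S)
  case Nil then show ?case by auto
next
  case (Cons z zs)
  show ?case
  proof (cases "snd z = 0 \<and> nopen zs = c")
    case True then show ?thesis by (intro exI[of _ "[]"] exI[of _ z] exI[of _ zs]) auto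
  next
    case False
    then have "c < nopen zs" using Cons.prems by (auto split: if_splits)
    from Cons.IH[OF this] obtain L y R where h: "zs = L @ y # R" "snd y = 0" "nopen R = c"
      "cls c t zs = L @ (fst y, t) # R" by blast
    show ?thesis using h False by (intro exI[of _ "z#L"] exI[of _ y] exI[of _ R]) auto
  qed
qed

lemma ins_split: "(L = [] \<or> snd (last L) = 0) \<Longrightarrow> nopen R = c \<Longrightarrow> ins c x (L @ R) = L @ x # R"
proof (induction L)
  case Nil then show ?case by (cases R) auto
next
  case (Cons y L)
  have "nopen (y # L @ R) > c"
  proof (cases "L = []")
    case True then show ?thesis using Cons.prems by auto
  next
    case False
    then obtain L' z where "L = L' @ [z]" by (metis rev_exhaust)
    then show ?thesis using Cons.prems by auto
  qed
  moreover have "ins c x (L @ R) = L @ x # R"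
    using Cons by (cases "L = []") auto
  ultimately show ?case by simp
qed

lemma cls_split: "snd y = 0 \<Longrightarrow> nopen R = c \<Longrightarrow> cls c t (L @ y # R) = L @ (fst y, t) # R"
  by (induction L) auto



lemma nopen_ins: "nopen (ins c x S) = nopen S + (if snd x = 0 then 1 else 0)"
  using ins_decomp[of S c x] by auto

lemma nopen_cls: "c < nopen S \<Longrightarrow> t \<noteq> 0 \<Longrightarrow> nopen (cls c t S) = nopen S - 1"
  using cls_decomp[of c S t] by auto

lemma length_ins: "length (ins c x S) = Suc (length S)"
  using ins_decomp[of S c x] by auto

lemma length_cls: "length (cls c t S) = length S"
  by (induction S) auto

lemma ins_inj: "x \<notin> set S \<Longrightarrow> c \<le> nopen S \<Longrightarrow> c' \<le> nopen S \<Longrightarrow> ins c x S = ins c' x S \<Longrightarrow> c = c'"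
proof -
  assume a: "x \<notin> set S" "c \<le> nopen S" "c' \<le> nopen S" "ins c x S = ins c' x S"
  obtain L R where h: "S = L @ R" "ins c x S = L @ x # R" "nopen R = min c (nopen S)"
    using ins_decomp[of S c x] by blast
  obtain L' R' where h': "S = L' @ R'" "ins c' x S = L' @ x # R'" "nopen R' = min c' (nopen S)"
    using ins_decomp[of S c' x] by blast
  have Y: "L @ x # R = L' @ x # R'"
    using trans[OF trans[OF h(2)[symmetric] a(4)] h'(2)] .
  have "x \<notin> set L" "x \<notin> set R" using a(1) h(1) by auto
  then have "R = R'" using append_Cons_eq_iff[of x L R L' R'] Y by blast
  then have "min c (nopen S) = min c' (nopen S)" using h(3) h'(3) by simp
  then show "c = c'" using a(2,3) by (simp add: min_def)
qed

lemma split_unique: "\<forall>p\<in>set L \<union> set L'. snd p \<noteq> t \<Longrightarrow> snd a = t \<Longrightarrow> snd b = t \<Longrightarrow>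
  L @ a # R = L' @ b # R' \<Longrightarrow> L = L' \<and> a = b \<and> R = R'"
proof (induction L arbitrary: L')
  case Nil then show ?case by (cases L') auto
next
  case (Cons z L)
  show ?case
  proof (cases L')
    case Nil
    then show ?thesis using Cons.prems by auto
  next
    case (Cons z' L'')
    have "L @ a # R = L'' @ b # R'" "z = z'" using Cons.prems(4) Cons by auto
    moreover have "\<forall>p\<in>set L \<union> set L''. snd p \<noteq> t" using Cons.prems(1) Cons by auto
    ultimately show ?thesis using Cons.IH[of L''] Cons.prems(2,3) Cons by auto
  qed
qed

lemma cls_inj: "\<forall>p\<in>set S. snd p \<noteq> t \<Longrightarrow> c < nopen S \<Longrightarrow> c' < nopen S \<Longrightarrow> cls c t S = cls c' t S \<Longrightarrow> c = c'"
proof -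
  assume a: "\<forall>p\<in>set S. snd p \<noteq> t" "c < nopen S" "c' < nopen S" "cls c t S = cls c' t S"
  from cls_decomp[OF a(2), of t] obtain L y R where h: "S = L @ y # R" "nopen R = c" "cls c t S = L @ (fst y, t) # R"
    by blast
  from cls_decomp[OF a(3), of t] obtain L' y' R' where h': "S = L' @ y' # R'" "nopen R' = c'" "cls c' t S = L' @ (fst y', t) # R'"
    by blast
  have "set L \<subseteq> set S" using h(1) by auto
  moreover have "set L' \<subseteq> set S" using h'(1) by auto
  ultimately have X: "\<forall>p\<in>set L \<union> set L'. snd p \<noteq> t" using a(1) by blast
  have Y: "L @ (fst y, t) # R = L' @ (fst y', t) # R'"
    using trans[OF trans[OF h(3)[symmetric] a(4)] h'(3)] .
  have "L = L' \<and> (fst y, t) = (fst y', t) \<and> R = R'"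
    using split_unique[OF X _ _ Y] by simp
  then show "c = c'" using h(2) h'(2) by simp
qed

lemma rt_fix: "\<forall>p\<in>set S. fst p > t \<and> (snd p = 0 \<or> snd p > t) \<Longrightarrow> t \<ge> 0 \<Longrightarrow> rt t S = S"
  by (induction S) auto

lemma rt_comp: "t \<le> s \<Longrightarrow> 0 \<le> s \<Longrightarrow> rt s (rt t S) = rt s S"
  by (induction S) auto

lemma rt_shift: "\<forall>p\<in>set S. fst p \<noteq> t \<and> snd p \<noteq> t \<Longrightarrow> rt (t - 1) S = rt t S"
  by (induction S) auto

lemma lastopen: "chn (L @ [(s,z)]) \<Longrightarrow> s \<le> t \<Longrightarrow> rt t L = [] \<or> snd (last (rt t L)) = 0"
proof (induction L arbitrary: s z rule: rev_induct)
  case Nil then show ?case by simp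
next
  case (snoc p L)
  have c: "chn (L @ [p])" "snd p < s" using snoc.prems by (auto simp: chn_append)
  show ?case
  proof (cases "fst p > t")
    case True then show ?thesis using c snoc.prems by auto
  next
    case False
    have "chn (L @ [(fst p, snd p)])" using c by simp
    from snoc.IH[OF this] False show ?thesis by auto
  qed
qed



definition altc :: "int list \<Rightarrow> bool" where
  "altc xs \<longleftrightarrow> (\<forall>i. 1 \<le> i \<and> i < length xs \<longrightarrow>
        (if odd i then pe xs i > pe xs (Suc i) else pe xs i < pe xs (Suc i)))"

lemma altc_Cons2: "altc (a#b#r) \<longleftrightarrow> a > b \<and> (r \<noteq> [] \<longrightarrow> b < hd r) \<and> altc r"
proof
  assume h: "altc (a#b#r)"
  have "a > b" using h[unfolded altc_def, rule_format, of 1] by (simp add: pe_def)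
  moreover have "r \<noteq> [] \<longrightarrow> b < hd r"
    using h[unfolded altc_def, rule_format, of 2] by (cases r) (auto simp: pe_def)
  moreover have "altc r"
    unfolding altc_def
  proof (intro allI impI)
    fix i assume i: "1 \<le> i \<and> i < length r"
    have X: "(if odd (Suc (Suc i)) then pe (a#b#r) (Suc (Suc i)) > pe (a#b#r) (Suc (Suc (Suc i))) else pe (a#b#r) (Suc (Suc i)) < pe (a#b#r) (Suc (Suc (Suc i))))"
      using h[unfolded altc_def, rule_format, of "Suc (Suc i)"] i by simp
    have e1: "pe (a#b#r) (Suc (Suc i)) = pe r i" and e2: "pe (a#b#r) (Suc (Suc (Suc i))) = pe r (Suc i)"
      using i by (auto simp: pe_def nth_Cons split: nat.split)
    show "(if odd i then pe r i > pe r (Suc i) else pe r i < pe r (Suc i))" using X unfolding e1 e2 by simp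
  qed
  ultimately show "a > b \<and> (r \<noteq> [] \<longrightarrow> b < hd r) \<and> altc r" by simp
next
  assume h: "a > b \<and> (r \<noteq> [] \<longrightarrow> b < hd r) \<and> altc r"
  show "altc (a#b#r)"
    unfolding altc_def
  proof (intro allI impI)
    fix i assume i: "1 \<le> i \<and> i < length (a#b#r)"
    consider "i = 1" | "i = 2" | j where "i = j + 2" "j \<ge> 1"
    proof -
      assume r1: "i = 1 \<Longrightarrow> thesis" and r2: "i = 2 \<Longrightarrow> thesis"
        and r3: "\<And>j. i = j + 2 \<Longrightarrow> j \<ge> 1 \<Longrightarrow> thesis"
      show thesis
      proof (cases "i \<ge> 3")
        case True then show thesis using r3[of "i - 2"] by simp
      next
        case False then show thesis using i r1 r2 by linarith
      qed
    qed
    then show "(if odd i then pe (a#b#r) i > pe (a#b#r) (Suc i) else pe (a#b#r) i < pe (a#b#r) (Suc i))"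
    proof cases
      case 1 then show ?thesis using h by (simp add: pe_def)
    next
      case 2 then show ?thesis using h i by (cases r) (auto simp: pe_def)
    next
      case 3
      then have "pe (a#b#r) i = pe r j" "pe (a#b#r) (Suc i) = pe r (Suc j)"
        by (auto simp: pe_def nth_Cons split: nat.split)
      moreover have "(if odd j then pe r j > pe r (Suc j) else pe r j < pe r (Suc j))"
        using h i 3 unfolding altc_def by auto
      ultimately show ?thesis using 3 by simp
    qed
  qed
qed

lemma altc_chn: "even (length xs) \<Longrightarrow> altc xs \<longleftrightarrow> chn (prs xs)"
proof (induction xs rule: prs.induct)
  case (1 a b r)
  then have e: "even (length r)" by simp
  have "prs r \<noteq> [] \<longleftrightarrow> r \<noteq> []" using e by (cases r rule: prs.cases) auto
  moreover have "r \<noteq> [] \<Longrightarrow> fst (hd (prs r)) = hd r" using e by (cases r rule: prs.cases) auto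
  ultimately show ?case using 1 e by (simp add: altc_Cons2 chn_Cons)
next
  case ("2_1") then show ?case by (simp add: altc_def)
next
  case ("2_2" v) then show ?case by simp
qed



lemma flat_append[simp]: "flat (X @ Y) = flat X @ flat Y"
  by (induction X) auto

lemma flat_nth: "i < 2 * length S \<Longrightarrow> flat S ! i = (if even i then fst (S ! (i div 2)) else snd (S ! (i div 2)))"
proof (induction S arbitrary: i)
  case Nil then show ?case by simp
next
  case (Cons p S)
  show ?case
  proof (cases "i \<ge> 2")
    case True
    define j where "j = i - 2"
    have ij: "i = Suc (Suc j)" using True by (simp add: j_def)
    have "j < 2 * length S" using Cons.prems ij by simp
    then show ?thesis using Cons.IH[of j] unfolding ij by simp
  next
    case False
    then consider "i = 0" | "i = 1" by linarith
    then show ?thesis by cases auto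
  qed
qed

lemma in_flat: "q \<in> set L \<Longrightarrow> fst q \<in> set (flat L) \<and> snd q \<in> set (flat L)"
  by (induction L) auto

lemma flat_decomp: "t \<in> set (flat S) \<Longrightarrow> \<exists>L p R. S = L @ p # R \<and> (t = fst p \<or> t = snd p)"
proof (induction S)
  case Nil then show ?case by simp
next
  case (Cons q S)
  show ?case
  proof (cases "t = fst q \<or> t = snd q")
    case True then show ?thesis by (intro exI[of _ "[]"] exI[of _ q] exI[of _ S]) simp
  next
    case False
    then have "t \<in> set (flat S)" using Cons.prems by simp
    from Cons.IH[OF this] obtain L p R where "S = L @ p # R" "t = fst p \<or> t = snd p" by blast
    then show ?thesis by (intro exI[of _ "q#L"] exI[of _ p] exI[of _ R]) simp
  qed
qed

lemma posk_eq:
  assumes "distinct xs" "\<forall>x\<in>set xs. x > 0" "1 \<le> i0" "i0 \<le> length xs"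
    "xs ! (i0 - 1) = int (length xs - k + 1)"
  shows "posk xs k = i0"
  unfolding posk_def
proof (rule the_equality)
  show "1 \<le> i0 \<and> i0 \<le> length xs \<and> \<bar>pe xs i0\<bar> = int (length xs - k + 1)"
    using assms by (simp add: pe_def)
next
  fix i assume h: "1 \<le> i \<and> i \<le> length xs \<and> \<bar>pe xs i\<bar> = int (length xs - k + 1)"
  have "i - 1 < length xs" using h by linarith
  then have "xs ! (i - 1) \<in> set xs" by (rule nth_mem)
  then have "xs ! (i - 1) > 0" using assms(2) by blast
  then have "xs ! (i - 1) = xs ! (i0 - 1)" using h assms(5) by (simp add: pe_def)
  moreover have "i - 1 < length xs" "i0 - 1 < length xs" using h assms(3,4) by linarith+
  ultimately have "i - 1 = i0 - 1" using nth_eq_iff_index_eq[OF assms(1)] by blast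
  moreover have "1 \<le> i" using h by simp
  ultimately show "i = i0" using assms(3) by linarith
qed

lemma nopen_rt: "0 \<le> t \<Longrightarrow> \<forall>q\<in>set R. snd q \<noteq> t \<Longrightarrow> nopen (rt t R) = length (filter (\<lambda>q. snd q < t \<and> t < fst q) R)"
  by (induction R) auto



lemma pe_pair: "j < length ps \<Longrightarrow> pe (flat ps) (2 * Suc j) = snd (ps ! j) \<and> pe (flat ps) (2 * Suc j - 1) = fst (ps ! j)"
proof -
  assume j: "j < length ps"
  have a: "flat ps ! (2 * j + 1) = snd (ps ! j)" using flat_nth[of "2*j+1" ps] j by simp
  have b: "flat ps ! (2 * j) = fst (ps ! j)" using flat_nth[of "2*j" ps] j by simp
  show ?thesis using a b by (simp add: pe_def)
qed

lemma inv_code_pairs: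
  assumes xs: "xs = flat (L @ p # R)" and i0: "i0 = 2 * length L + 1 \<or> i0 = 2 * length L + 2"
    and pt: "pe xs i0 = t" and nR: "\<forall>q\<in>set R. snd q \<noteq> t" and t0: "0 \<le> t"
  shows "inv_code xs i0 = nopen (rt t R)"
proof -
  define ps where "ps = L @ p # R"
  define l where "l = length L"
  have lenx: "length xs = 2 * length ps" using xs ps_def by simp
  have lps: "length ps = l + 1 + length R" using ps_def l_def by simp
  have ic: "inv_code xs i0 = card {k. 1 \<le> k \<and> k \<le> length ps \<and> i0 < 2 * k - 1 \<and>
        pe xs (2 * k) < pe xs i0 \<and> pe xs i0 < pe xs (2 * k - 1)}"
    unfolding inv_code_def Let_def using lenx by simp
  have nthR: "ps ! (l + Suc j) = R ! j" for j
    using nth_append_length_plus[of L "p # R" "Suc j"] ps_def l_def by simp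
  have "{k. 1 \<le> k \<and> k \<le> length ps \<and> i0 < 2 * k - 1 \<and>
        pe xs (2 * k) < pe xs i0 \<and> pe xs i0 < pe xs (2 * k - 1)}
      = (\<lambda>j. Suc (l + Suc j)) ` {j. j < length R \<and> snd (R ! j) < t \<and> t < fst (R ! j)}"
  proof (intro set_eqI iffI)
    fix k assume "k \<in> {k. 1 \<le> k \<and> k \<le> length ps \<and> i0 < 2 * k - 1 \<and>
        pe xs (2 * k) < pe xs i0 \<and> pe xs i0 < pe xs (2 * k - 1)}"
    then have k: "1 \<le> k" "k \<le> length ps" "i0 < 2 * k - 1" "pe xs (2 * k) < t" "t < pe xs (2 * k - 1)"
      using pt by auto
    define j where "j = k - l - 2"
    have kj: "k = Suc (l + Suc j)" using k i0 l_def j_def by linarith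
    have jR: "j < length R" using k(2) kj lps by linarith
    have "l + Suc j < length ps" using jR lps by linarith
    from pe_pair[OF this] have "pe xs (2 * k) = snd (R ! j)" "pe xs (2 * k - 1) = fst (R ! j)"
      using kj nthR xs ps_def by auto
    show "k \<in> (\<lambda>j. Suc (l + Suc j)) ` {j. j < length R \<and> snd (R ! j) < t \<and> t < fst (R ! j)}"
    proof (rule image_eqI[where x=j])
      show "k = Suc (l + Suc j)" by (rule kj)
      show "j \<in> {j. j < length R \<and> snd (R ! j) < t \<and> t < fst (R ! j)}"
        using k(4,5) jR \<open>pe xs (2 * k) = snd (R ! j)\<close> \<open>pe xs (2 * k - 1) = fst (R ! j)\<close> by simp
    qed
  next
    fix k assume "k \<in> (\<lambda>j. Suc (l + Suc j)) ` {j. j < length R \<and> snd (R ! j) < t \<and> t < fst (R ! j)}"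
    then obtain j where j: "k = Suc (l + Suc j)" "j < length R" "snd (R ! j) < t" "t < fst (R ! j)" by auto
    have "l + Suc j < length ps" using j lps by linarith
    from pe_pair[OF this] have "pe xs (2 * k) = snd (R ! j)" "pe xs (2 * k - 1) = fst (R ! j)"
      using j nthR xs ps_def by auto
    moreover have "i0 < 2 * k - 1" "k \<le> length ps" using j i0 l_def lps by linarith+
    ultimately show "k \<in> {k. 1 \<le> k \<and> k \<le> length ps \<and> i0 < 2 * k - 1 \<and>
        pe xs (2 * k) < pe xs i0 \<and> pe xs i0 < pe xs (2 * k - 1)}"
      using j pt by auto
  qed
  moreover have "card ((\<lambda>j. Suc (l + Suc j)) ` {j. j < length R \<and> snd (R ! j) < t \<and> t < fst (R ! j)})
     = card {j. j < length R \<and> snd (R ! j) < t \<and> t < fst (R ! j)}"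
    by (rule card_image) (auto simp: inj_on_def)
  ultimately have "inv_code xs i0 = card {j. j < length R \<and> snd (R ! j) < t \<and> t < fst (R ! j)}"
    using ic by simp
  also have "\<dots> = length (filter (\<lambda>q. snd q < t \<and> t < fst q) R)"
    by (simp add: length_filter_conv_card)
  also have "\<dots> = nopen (rt t R)" using nopen_rt[OF t0 nR] by simp
  finally show ?thesis .
qed



lemma step_alt:
  assumes alt: "alt_perm m xs" and ev: "even m" and t1: "1 \<le> t" and t2: "t \<le> int m"
  defines "k \<equiv> m + 1 - nat t"
  shows "0 \<le> Phi_label xs k \<and>
    (Phi_step xs k \<longrightarrow> nat (Phi_label xs k) \<le> nopen (rt t (prs xs)) \<and>
        rt (t-1) (prs xs) = ins (nat (Phi_label xs k)) (t,0) (rt t (prs xs))) \<and>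
    (\<not> Phi_step xs k \<longrightarrow> nat (Phi_label xs k) < nopen (rt t (prs xs)) \<and>
        rt (t-1) (prs xs) = cls (nat (Phi_label xs k)) t (rt t (prs xs)))"
proof -
  define ps where "ps = prs xs"
  have len: "length xs = m" and dist: "distinct xs" and setx: "set xs = {1..int m}"
    using alt by (auto simp: alt_perm_def)
  have altc: "altc xs" using alt unfolding alt_perm_def altc_def by blast
  have xs_eq: "xs = flat ps" using flat_prs ev len ps_def by simp
  have chn: "chn ps" using altc_chn ev len altc ps_def by simp
  have pos: "\<forall>x\<in>set xs. x > 0" using setx by auto
  have "t \<in> set (flat ps)" using setx t1 t2 xs_eq by auto
  then obtain L p R where dec: "ps = L @ p # R" and tp: "t = fst p \<or> t = snd p"
    using flat_decomp by blast
  have xs2: "xs = flat L @ fst p # snd p # flat R" using xs_eq dec by simp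
  have dist2: "distinct (flat L @ fst p # snd p # flat R)" using dist xs2 by simp
  then have nd: "fst p \<notin> set (flat L)" "snd p \<notin> set (flat L)" "fst p \<notin> set (flat R)"
    "snd p \<notin> set (flat R)" by auto
  have tnL: "t \<notin> set (flat L)" and tnR: "t \<notin> set (flat R)" using nd tp by auto
  have notL: "\<forall>q\<in>set L. fst q \<noteq> t \<and> snd q \<noteq> t"
  proof
    fix q assume "q \<in> set L" from in_flat[OF this] tnL show "fst q \<noteq> t \<and> snd q \<noteq> t" by auto
  qed
  have notR: "\<forall>q\<in>set R. fst q \<noteq> t \<and> snd q \<noteq> t"
  proof
    fix q assume "q \<in> set R" from in_flat[OF this] tnR show "fst q \<noteq> t \<and> snd q \<noteq> t" by auto
  qed
  have cc: "chn L \<and> chn (p # R) \<and> (L \<noteq> [] \<longrightarrow> snd (last L) < fst p)"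
    using chn dec chn_append[of L "p # R"] by simp
  then have sp: "snd p < fst p" using chn_Cons[of p R] by simp
  have chnLp: "chn (L @ [p])" using cc sp chn_append[of L "[p]"] by simp
  have nt: "1 \<le> nat t" "nat t \<le> m" "int (nat t) = t" using t1 t2 by auto
  have kv: "length xs - k + 1 = nat t" using nt len k_def by linarith
  have rtL: "rt (t - 1) L = rt t L" using rt_shift[OF notL] .
  have rtR: "rt (t - 1) R = rt t R" using rt_shift[OF notR] .
  have nRs: "\<forall>q\<in>set R. snd q \<noteq> t" using notR by blast
  have t0: "0 \<le> t" using t1 by simp
  define c where "c = nopen (rt t R)"
  show ?thesis
  proof (cases "t = fst p")
    case True
    define i0 where "i0 = 2 * length L + 1"
    have xi0: "xs ! (i0 - 1) = t" using xs2 True i0_def by (simp add: nth_append)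
    have i0l: "1 \<le> i0" "i0 \<le> length xs" using i0_def xs2 by auto
    have pk: "posk xs k = i0" using posk_eq[OF dist pos i0l] xi0 kv nt by simp
    have pet: "pe xs i0 = t" using xi0 by (simp add: pe_def)
    have ic: "inv_code xs i0 = c"
      using inv_code_pairs[of xs L p R i0 t] xs2 i0_def pet nRs t0 c_def by simp
    have step: "Phi_step xs k" using pk pet t1 i0_def by (simp add: Phi_step_def)
    have lab: "Phi_label xs k = int c" using pk pet t1 ic by (simp add: Phi_label_def)
    have rt1: "rt t ps = rt t L @ rt t R" using dec True by simp
    have rt2: "rt (t - 1) ps = rt t L @ (t, 0) # rt t R" using dec True sp rtL rtR by simp
    have lo: "rt t L = [] \<or> snd (last (rt t L)) = 0"
      using lastopen[of L "fst p" "snd p" t] chnLp True by simp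
    have "ins c (t, 0) (rt t ps) = rt (t - 1) ps"
      using ins_split[OF lo, of "rt t R" c "(t,0)"] rt1 rt2 c_def by simp
    moreover have "c \<le> nopen (rt t ps)" using rt1 c_def by simp
    ultimately show ?thesis using step lab ps_def by simp
  next
    case False
    then have tsp: "t = snd p" using tp by simp
    define i0 where "i0 = 2 * length L + 2"
    have xi0: "xs ! (i0 - 1) = t" using xs2 tsp i0_def by (simp add: nth_append)
    have i0l: "1 \<le> i0" "i0 \<le> length xs" using i0_def xs2 by auto
    have pk: "posk xs k = i0" using posk_eq[OF dist pos i0l] xi0 kv nt by simp
    have pet: "pe xs i0 = t" using xi0 by (simp add: pe_def)
    have ic: "inv_code xs i0 = c"
      using inv_code_pairs[of xs L p R i0 t] xs2 i0_def pet nRs t0 c_def by simp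
    have step: "\<not> Phi_step xs k" using pk pet t1 i0_def by (simp add: Phi_step_def)
    have lab: "Phi_label xs k = int c" using pk pet t1 ic by (simp add: Phi_label_def)
    have fp: "fst p > t" using sp tsp by simp
    have rt1: "rt t ps = rt t L @ (fst p, 0) # rt t R" using dec tsp fp by simp
    have rt2: "rt (t - 1) ps = rt t L @ (fst p, t) # rt t R" using dec tsp fp rtL rtR by simp
    have "cls c t (rt t ps) = rt (t - 1) ps"
      using cls_split[of "(fst p, 0)" "rt t R" c t "rt t L"] rt1 rt2 c_def by simp
    moreover have "c < nopen (rt t ps)" using rt1 c_def by simp
    ultimately show ?thesis using step lab ps_def by simp
  qed
qed



fun dst :: "nat \<Rightarrow> bool list \<Rightarrow> int list \<Rightarrow> nat \<Rightarrow> st" where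
  "dst m P W 0 = []"
| "dst m P W (Suc k) = (if P ! k then ins (nat (W ! k)) (int m - int k, 0) (dst m P W k)
     else cls (nat (W ! k)) (int m - int k) (dst m P W k))"

definition Wl :: "int list \<Rightarrow> int list" where
  "Wl xs = map (Phi_label xs) [1..<Suc (length xs)]"

lemma Phi_eq: "Phi xs = (Phi_path xs, Wl xs)"
  by (simp add: Phi_def Wl_def)

lemma Phi_path_nth: "k < length xs \<Longrightarrow> Phi_path xs ! k = Phi_step xs (Suc k)"
  by (simp add: Phi_path_def del: upt_Suc)

lemma Wl_nth: "k < length xs \<Longrightarrow> Wl xs ! k = Phi_label xs (Suc k)"
  by (simp add: Wl_def del: upt_Suc)

lemma length_Phi_path[simp]: "length (Phi_path xs) = length xs"
  by (simp add: Phi_path_def del: upt_Suc)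

lemma length_Wl[simp]: "length (Wl xs) = length xs"
  by (simp add: Wl_def del: upt_Suc)

lemma rt_empty: "\<forall>q\<in>set S. fst q \<le> t \<Longrightarrow> rt t S = []"
  by (induction S) auto

lemma alt_basics:
  assumes alt: "alt_perm m xs" and ev: "even m"
  shows "length xs = m" "flat (prs xs) = xs" "chn (prs xs)" "distinct xs" "set xs = {1..int m}"
proof -
  show len: "length xs = m" and "distinct xs" and "set xs = {1..int m}"
    using alt by (auto simp: alt_perm_def)
  show "flat (prs xs) = xs" using flat_prs ev len by simp
  have altc: "altc xs" using alt unfolding alt_perm_def altc_def by blast
  then show "chn (prs xs)" using altc_chn ev len by simp
qed

lemma alt_dst:
  assumes alt: "alt_perm m xs" and ev: "even m"
  shows "k \<le> m \<Longrightarrow> dst m (Phi_path xs) (Wl xs) k = rt (int m - int k) (prs xs)"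
proof (induction k)
  case 0
  have "\<forall>q\<in>set (prs xs). fst q \<le> int m"
  proof
    fix q assume "q \<in> set (prs xs)"
    then have "fst q \<in> set (flat (prs xs))" using in_flat by blast
    then show "fst q \<le> int m" using alt_basics[OF alt ev] by auto
  qed
  then show ?case using rt_empty by simp
next
  case (Suc k)
  define t where "t = int m - int k"
  have t1: "1 \<le> t" "t \<le> int m" using Suc.prems t_def by auto
  have kk: "m + 1 - nat t = Suc k" using t_def Suc.prems by auto
  have lenx: "length xs = m" using alt_basics[OF alt ev] by simp
  have km: "k < length xs" using Suc.prems lenx by simp
  have IH: "dst m (Phi_path xs) (Wl xs) k = rt t (prs xs)" using Suc t_def by simp
  have st: "0 \<le> Phi_label xs (Suc k) \<and>
    (Phi_step xs (Suc k) \<longrightarrow> nat (Phi_label xs (Suc k)) \<le> nopen (rt t (prs xs)) \<and>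
        rt (t-1) (prs xs) = ins (nat (Phi_label xs (Suc k))) (t,0) (rt t (prs xs))) \<and>
    (\<not> Phi_step xs (Suc k) \<longrightarrow> nat (Phi_label xs (Suc k)) < nopen (rt t (prs xs)) \<and>
        rt (t-1) (prs xs) = cls (nat (Phi_label xs (Suc k))) t (rt t (prs xs)))"
    using step_alt[OF alt ev t1] kk by simp
  have e: "int m - int (Suc k) = t - 1" using t_def by simp
  have dk: "dst m (Phi_path xs) (Wl xs) (Suc k) = (if Phi_step xs (Suc k) then ins (nat (Phi_label xs (Suc k))) (t, 0) (rt t (prs xs))
     else cls (nat (Phi_label xs (Suc k))) t (rt t (prs xs)))"
    using IH Phi_path_nth[OF km] Wl_nth[OF km] by (simp add: t_def)
  show ?case unfolding dk e using st by simp
qed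

lemma alt_bounds:
  assumes alt: "alt_perm m xs" and ev: "even m" and km: "k < m"
  shows "0 \<le> Wl xs ! k \<and> (Phi_path xs ! k \<longrightarrow> nat (Wl xs ! k) \<le> nopen (dst m (Phi_path xs) (Wl xs) k))
     \<and> (\<not> Phi_path xs ! k \<longrightarrow> nat (Wl xs ! k) < nopen (dst m (Phi_path xs) (Wl xs) k))"
proof -
  define t where "t = int m - int k"
  have t1: "1 \<le> t" "t \<le> int m" using km t_def by auto
  have kk: "m + 1 - nat t = Suc k" using t_def km by auto
  have lenx: "length xs = m" using alt_basics[OF alt ev] by simp
  have km': "k < length xs" using km lenx by simp
  have D: "dst m (Phi_path xs) (Wl xs) k = rt t (prs xs)" using alt_dst[OF alt ev] km t_def by simp
  show ?thesis using step_alt[OF alt ev t1] kk D Phi_path_nth[OF km'] Wl_nth[OF km'] by simp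
qed

lemma ypos_0[simp]: "ypos P 0 = 0"
  by (simp add: ypos_def)

lemma ypos_Suc: "k < length P \<Longrightarrow> ypos P (Suc k) = ypos P k + (if P ! k then 1 else -1)"
  by (simp add: ypos_def take_Suc_conv_app_nth)

lemma dst_nopen:
  assumes "\<forall>j<K. \<not> P ! j \<longrightarrow> nat (W ! j) < nopen (dst m P W j)" "K \<le> length P" "K \<le> m"
  shows "ypos P K = int (nopen (dst m P W K))"
  using assms
proof (induction K)
  case 0 then show ?case by simp
next
  case (Suc K)
  have IH: "ypos P K = int (nopen (dst m P W K))" using Suc by simp
  have kl: "K < length P" using Suc.prems by simp
  have tn: "int m - int K \<noteq> 0" using Suc.prems by simp
  show ?case
  proof (cases "P ! K")
    case True
    then show ?thesis using IH ypos_Suc[OF kl] nopen_ins by simp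
  next
    case False
    then have "nat (W ! K) < nopen (dst m P W K)" using Suc.prems by simp
    then show ?thesis using IH ypos_Suc[OF kl] nopen_cls[OF _ tn] False by simp
  qed
qed



lemma nopen_zero: "\<forall>q\<in>set S. snd q \<noteq> 0 \<Longrightarrow> nopen S = 0"
  by (induction S) auto

lemma alt_final:
  assumes alt: "alt_perm m xs" and ev: "even m"
  shows "dst m (Phi_path xs) (Wl xs) m = prs xs"
proof -
  have b: "flat (prs xs) = xs" "set xs = {1..int m}" using alt_basics[OF alt ev] by auto
  have "\<forall>q\<in>set (prs xs). fst q > 0 \<and> (snd q = 0 \<or> snd q > 0)"
  proof
    fix q assume "q \<in> set (prs xs)"
    then have "fst q \<in> set xs" "snd q \<in> set xs" using in_flat b(1) by metis+
    then show "fst q > 0 \<and> (snd q = 0 \<or> snd q > 0)" using b(2) by auto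
  qed
  then have "rt 0 (prs xs) = prs xs" using rt_fix by simp
  then show ?thesis using alt_dst[OF alt ev, of m] by simp
qed

lemma alt_inj:
  assumes "alt_perm m xs" "alt_perm m ys" "even m" "Phi xs = Phi ys"
  shows "xs = ys"
proof -
  have "Phi_path xs = Phi_path ys" "Wl xs = Wl ys" using assms(4) by (simp_all add: Phi_eq)
  then have "prs xs = prs ys" using alt_final[OF assms(1,3)] alt_final[OF assms(2,3)] by simp
  then show ?thesis using alt_basics(2)[OF assms(1,3)] alt_basics(2)[OF assms(2,3)] by metis
qed

lemma alt_image:
  assumes alt: "alt_perm m xs" and ev: "even m"
  shows "labeled_ballot m 0 (Phi xs)"
proof -
  define P where "P = Phi_path xs"
  define W where "W = Wl xs"
  have lenx: "length xs = m" using alt_basics[OF alt ev] by simp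
  have lP: "length P = m" "length W = m" using lenx P_def W_def by simp_all
  have bnd: "\<forall>j<m. \<not> P ! j \<longrightarrow> nat (W ! j) < nopen (dst m P W j)"
    using alt_bounds[OF alt ev] P_def W_def by blast
  have yp: "ypos P j = int (nopen (dst m P W j))" if "j \<le> m" for j
    using dst_nopen[of j P W m] bnd that lP by simp
  have c1: "\<forall>j \<le> m. ypos P j \<ge> 0" using yp by simp
  have c2: "0 \<le> W ! (k - 1) \<and> W ! (k - 1) \<le> step_height P k" if k: "1 \<le> k" "k \<le> m" for k
  proof -
    define j where "j = k - 1"
    have kj: "k = Suc j" "j < m" using k j_def by auto
    have B0: "0 \<le> W ! j \<and> (P ! j \<longrightarrow> nat (W ! j) \<le> nopen (dst m P W j))
     \<and> (\<not> P ! j \<longrightarrow> nat (W ! j) < nopen (dst m P W j))"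
      using alt_bounds[OF alt ev kj(2)] P_def W_def by simp
    have sh: "step_height P k = min (ypos P j) (ypos P (Suc j))"
      using kj by (simp add: step_height_def)
    have y1: "ypos P j = int (nopen (dst m P W j))" using yp kj by simp
    have y2: "ypos P (Suc j) = ypos P j + (if P ! j then 1 else -1)"
      using ypos_Suc[of j P] kj lP by simp
    have Wj: "W ! j = int (nat (W ! j))" using B0 by simp
    have ws: "W ! (k - 1) = W ! j" using j_def by simp
    show ?thesis
    proof (cases "P ! j")
      case True
      then have "nat (W ! j) \<le> nopen (dst m P W j)" using B0 by simp
      then have "W ! j \<le> int (nopen (dst m P W j))" using Wj by linarith
      then show ?thesis using sh y1 y2 True B0 ws by simp
    next
      case False
      then have "nat (W ! j) < nopen (dst m P W j)" using B0 by simp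
      then have "W ! j < int (nopen (dst m P W j))" using Wj by linarith
      then show ?thesis using sh y1 y2 False B0 ws by simp
    qed
  qed
  have c3: "ypos P m = 0"
  proof -
    have "\<forall>q\<in>set (prs xs). snd q \<noteq> 0"
    proof
      fix q assume "q \<in> set (prs xs)"
      then have "snd q \<in> set xs" using in_flat alt_basics(2)[OF alt ev] by metis
      then show "snd q \<noteq> 0" using alt_basics(5)[OF alt ev] by auto
    qed
    then have "nopen (prs xs) = 0" by (rule nopen_zero)
    then show ?thesis using yp[of m] alt_final[OF alt ev] P_def W_def by simp
  qed
  show ?thesis unfolding labeled_ballot_def Phi_eq using lP c1 c2 c3 P_def W_def by auto
qed



fun vl :: "st \<Rightarrow> int list" where
  "vl [] = []"
| "vl (q # S) = (if snd q = 0 then [fst q] else [fst q, snd q]) @ vl S"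

lemma vl_append[simp]: "vl (X @ Y) = vl X @ vl Y"
  by (induction X) auto

definition Inv :: "int \<Rightarrow> int \<Rightarrow> st \<Rightarrow> bool" where
  "Inv m t S \<longleftrightarrow> distinct (vl S) \<and> set (vl S) = {t+1..m} \<and> chn S"

lemma Inv_vals: "Inv m t S \<Longrightarrow> q \<in> set S \<Longrightarrow> fst q > t \<and> (snd q = 0 \<or> snd q > t)"
proof -
  assume a: "Inv m t S" "q \<in> set S"
  have "fst q \<in> set (vl S) \<and> (snd q \<noteq> 0 \<longrightarrow> snd q \<in> set (vl S))"
    using a(2) by (induction S) auto
  then show ?thesis using a(1) unfolding Inv_def by auto
qed

lemma lb_facts:
  assumes "labeled_ballot m 0 (P, W)"
  shows "length P = m" "length W = m" "\<forall>j\<le>m. ypos P j \<ge> 0"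
    "\<forall>k<m. 0 \<le> W ! k \<and> W ! k \<le> step_height P (Suc k)" "ypos P m = 0"
proof -
  show "length P = m" "length W = m" "\<forall>j\<le>m. ypos P j \<ge> 0" "ypos P m = 0"
    using assms by (auto simp: labeled_ballot_def)
  show "\<forall>k<m. 0 \<le> W ! k \<and> W ! k \<le> step_height P (Suc k)"
  proof (intro allI impI)
    fix k assume "k < m"
    then have "1 \<le> Suc k \<and> Suc k \<le> m" by simp
    then show "0 \<le> W ! k \<and> W ! k \<le> step_height P (Suc k)"
      using assms unfolding labeled_ballot_def by fastforce
  qed
qed

lemma lb_cond:
  assumes lb: "labeled_ballot m 0 (P, W)"
  shows "K \<le> m \<Longrightarrow> \<forall>j<K. \<not> P ! j \<longrightarrow> nat (W ! j) < nopen (dst m P W j)"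
proof (induction K)
  case 0 then show ?case by simp
next
  case (Suc K)
  have IH: "\<forall>j<K. \<not> P ! j \<longrightarrow> nat (W ! j) < nopen (dst m P W j)" using Suc by simp
  have F: "length P = m" "\<forall>k<m. 0 \<le> W ! k \<and> W ! k \<le> step_height P (Suc k)"
    using lb_facts[OF lb] by auto
  have y: "ypos P K = int (nopen (dst m P W K))" using dst_nopen[OF IH] Suc.prems F by simp
  have "\<not> P ! K \<longrightarrow> nat (W ! K) < nopen (dst m P W K)"
  proof
    assume np: "\<not> P ! K"
    have w: "0 \<le> W ! K" "W ! K \<le> step_height P (Suc K)" using F Suc.prems by auto
    have y2: "ypos P (Suc K) = ypos P K - 1" using ypos_Suc[of K P] np F Suc.prems by simp
    have "step_height P (Suc K) \<le> ypos P (Suc K)" by (simp add: step_height_def)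
    then have "W ! K < int (nopen (dst m P W K))" using w y y2 by linarith
    then show "nat (W ! K) < nopen (dst m P W K)" using w by linarith
  qed
  then show ?case using IH less_Suc_eq by auto
qed

lemma lb_ypos:
  assumes lb: "labeled_ballot m 0 (P, W)" and K: "K \<le> m"
  shows "ypos P K = int (nopen (dst m P W K))"
  using dst_nopen[OF lb_cond[OF lb K]] K lb_facts(1)[OF lb] by simp

lemma lb_up:
  assumes lb: "labeled_ballot m 0 (P, W)" and k: "k < m"
  shows "0 \<le> W ! k \<and> nat (W ! k) \<le> nopen (dst m P W k)"
proof -
  have w: "0 \<le> W ! k" "W ! k \<le> step_height P (Suc k)" using lb_facts(4)[OF lb] k by auto
  have "step_height P (Suc k) \<le> ypos P k" by (simp add: step_height_def)
  then show ?thesis using w lb_ypos[OF lb, of k] k by linarith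
qed

lemma lb_down:
  assumes lb: "labeled_ballot m 0 (P, W)" and k: "k < m" and np: "\<not> P ! k"
  shows "nat (W ! k) < nopen (dst m P W k)"
  using lb_cond[OF lb, of "Suc k"] k np by simp

lemma Inv_step:
  assumes lb: "labeled_ballot m 0 (P, W)" and k: "k < m"
    and I: "Inv (int m) (int m - int k) (dst m P W k)"
  shows "Inv (int m) (int m - int (Suc k)) (dst m P W (Suc k))"
proof -
  define t where "t = int m - int k"
  define D where "D = dst m P W k"
  define c where "c = nat (W ! k)"
  have t1: "1 \<le> t" using k t_def by simp
  have e: "int m - int (Suc k) = t - 1" using t_def by simp
  have I': "Inv (int m) t D" using I t_def D_def by simp
  have vals: "\<And>q. q \<in> set D \<Longrightarrow> fst q > t \<and> (snd q = 0 \<or> snd q > t)" using Inv_vals[OF I'] by blast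
  have tn: "t \<notin> set (vl D)" using I' unfolding Inv_def by auto
  have dI: "distinct (vl D)" "set (vl D) = {t+1..int m}" "chn D" using I' unfolding Inv_def by auto
  have sete: "{t - 1 + 1..int m} = insert t {t+1..int m}" using t1 k t_def by auto
  show ?thesis
  proof (cases "P ! k")
    case True
    have dS: "dst m P W (Suc k) = ins c (t, 0) D" using True t_def D_def c_def by simp
    obtain L R where h: "D = L @ R" "ins c (t, 0) D = L @ (t, 0) # R" "L \<noteq> [] \<longrightarrow> snd (last L) = 0"
      using ins_decomp[of D c "(t,0)"] by blast
    have vl1: "vl (L @ (t, 0) # R) = vl L @ t # vl R" by simp
    have vl0: "vl D = vl L @ vl R" using h(1) by simp
    have d: "distinct (vl L @ t # vl R)" using dI(1) tn vl0 by auto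
    have s: "set (vl L @ t # vl R) = {t - 1 + 1..int m}" using dI(2) vl0 sete by auto
    have cLR: "chn L" "chn R" "L \<noteq> [] \<longrightarrow> R \<noteq> [] \<longrightarrow> snd (last L) < fst (hd R)"
      using dI(3) h(1) chn_append[of L R] by auto
    have hdR: "R \<noteq> [] \<longrightarrow> fst (hd R) > t"
    proof
      assume "R \<noteq> []" then have "hd R \<in> set D" using h(1) by simp
      then show "fst (hd R) > t" using vals by blast
    qed
    have "chn ((t, 0) # R)" using cLR(2) hdR t1 chn_Cons[of "(t,0)" R] by auto
    then have "chn (L @ (t, 0) # R)" using cLR(1) h(3) t1 chn_append[of L "(t,0) # R"] by auto
    then show ?thesis unfolding e dS h(2) Inv_def using d s vl1 by simp
  next
    case False
    have dS: "dst m P W (Suc k) = cls c t D" using False t_def D_def c_def by simp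
    have cn: "c < nopen D" using lb_down[OF lb k False] c_def D_def by simp
    obtain L y R where h: "D = L @ y # R" "snd y = 0" "cls c t D = L @ (fst y, t) # R"
      using cls_decomp[OF cn, of t] by blast
    have vl1: "vl (L @ (fst y, t) # R) = vl L @ fst y # t # vl R" using t1 by simp
    have vl0: "vl D = vl L @ fst y # vl R" using h(1,2) by simp
    have d: "distinct (vl L @ fst y # t # vl R)" using dI(1) tn vl0 by auto
    have s: "set (vl L @ fst y # t # vl R) = {t - 1 + 1..int m}" using dI(2) vl0 sete by auto
    have cLR: "chn L" "chn (y # R)" "L \<noteq> [] \<longrightarrow> snd (last L) < fst y"
      using dI(3) h(1) chn_append[of L "y # R"] by auto
    have yR: "chn R" using cLR(2) chn_Cons[of y R] by simp
    have fy: "fst y > t" using vals h(1) by simp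
    have hdR: "R \<noteq> [] \<longrightarrow> fst (hd R) > t"
    proof
      assume "R \<noteq> []" then have "hd R \<in> set D" using h(1) by simp
      then show "fst (hd R) > t" using vals by blast
    qed
    have "chn ((fst y, t) # R)" using yR hdR fy chn_Cons[of "(fst y, t)" R] by auto
    then have "chn (L @ (fst y, t) # R)" using cLR(1,3) chn_append[of L "(fst y, t) # R"] by auto
    then show ?thesis unfolding e dS h(3) Inv_def using d s vl1 by simp
  qed
qed

lemma lb_Inv:
  assumes lb: "labeled_ballot m 0 (P, W)"
  shows "k \<le> m \<Longrightarrow> Inv (int m) (int m - int k) (dst m P W k)"
proof (induction k)
  case 0 then show ?case by (simp add: Inv_def)
next
  case (Suc k) then show ?case using Inv_step[OF lb] by simp
qed



lemma rt_step:
  assumes lb: "labeled_ballot m 0 (P, W)" and k: "k < m"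
  shows "rt (int m - int k) (dst m P W (Suc k)) = dst m P W k"
proof -
  define t where "t = int m - int k"
  define D where "D = dst m P W k"
  define c where "c = nat (W ! k)"
  have t1: "1 \<le> t" using k t_def by simp
  have I': "Inv (int m) t D" using lb_Inv[OF lb, of k] k t_def D_def by simp
  have vals: "\<And>q. q \<in> set D \<Longrightarrow> fst q > t \<and> (snd q = 0 \<or> snd q > t)" using Inv_vals[OF I'] by blast
  have rD: "rt t D = D" using rt_fix[of D t] vals t1 by auto
  show ?thesis
  proof (cases "P ! k")
    case True
    have dS: "dst m P W (Suc k) = ins c (t, 0) D" using True t_def D_def c_def by simp
    obtain L R where h: "D = L @ R" "ins c (t, 0) D = L @ (t, 0) # R"
      using ins_decomp[of D c "(t,0)"] by blast
    have "rt t (L @ (t, 0) # R) = rt t (L @ R)" by simp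
    then show ?thesis using dS h rD t_def D_def by simp
  next
    case False
    have dS: "dst m P W (Suc k) = cls c t D" using False t_def D_def c_def by simp
    have cn: "c < nopen D" using lb_down[OF lb k False] c_def D_def by simp
    obtain L y R where h: "D = L @ y # R" "snd y = 0" "cls c t D = L @ (fst y, t) # R"
      using cls_decomp[OF cn, of t] by blast
    have fy: "fst y > t" using vals h(1) by simp
    have "rt t (L @ (fst y, t) # R) = rt t (L @ y # R)" using fy h(2) t1 by simp
    then show ?thesis using dS h rD t_def D_def by simp
  qed
qed

lemma rt_restrict:
  assumes lb: "labeled_ballot m 0 (P, W)" and kk: "k \<le> k'"
  shows "k' \<le> m \<Longrightarrow> rt (int m - int k) (dst m P W k') = dst m P W k"
  using kk
proof (induction k' rule: dec_induct)
  case base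
  have I': "Inv (int m) (int m - int k) (dst m P W k)" using lb_Inv[OF lb] base by simp
  show ?case using rt_fix[of "dst m P W k" "int m - int k"] Inv_vals[OF I'] base by auto
next
  case (step n)
  have "rt (int m - int k) (dst m P W (Suc n)) = rt (int m - int k) (rt (int m - int n) (dst m P W (Suc n)))"
    using rt_comp[of "int m - int n" "int m - int k" "dst m P W (Suc n)"] step by simp
  also have "\<dots> = rt (int m - int k) (dst m P W n)" using rt_step[OF lb] step by simp
  also have "\<dots> = dst m P W k" using step by simp
  finally show ?case .
qed

lemma vl_flat: "\<forall>q\<in>set S. snd q \<noteq> 0 \<Longrightarrow> vl S = flat S"
  by (induction S) auto

lemma lb_surj:
  assumes lb: "labeled_ballot m 0 (P, W)"
  shows "\<exists>xs. alt_perm m xs \<and> Phi xs = (P, W)"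
proof -
  define S where "S = dst m P W m"
  have IS: "Inv (int m) 0 S" using lb_Inv[OF lb, of m] S_def by simp
  have F: "length P = m" "length W = m" "ypos P m = 0" using lb_facts[OF lb] by auto
  have "nopen S = 0" using lb_ypos[OF lb, of m] F S_def by simp
  then have sn: "\<forall>q\<in>set S. snd q \<noteq> 0" unfolding nopen_def by (auto simp: filter_empty_conv)
  define xs where "xs = flat S"
  have vx: "vl S = xs" using vl_flat[OF sn] xs_def by simp
  have dx: "distinct xs" and sx: "set xs = {1..int m}" using IS vx unfolding Inv_def by auto
  have lx: "length xs = m" using distinct_card[OF dx] sx by simp
  have ev: "even m" using lx xs_def by auto
  have pS: "prs xs = S" using xs_def by simp
  have "altc xs" using altc_chn[of xs] lx ev pS IS unfolding Inv_def by simp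
  then have alt: "alt_perm m xs" using lx dx sx unfolding alt_perm_def altc_def by blast
  have DD: "dst m (Phi_path xs) (Wl xs) k = dst m P W k" if "k \<le> m" for k
    using alt_dst[OF alt ev that] pS rt_restrict[OF lb that] S_def by simp
  have eq: "Phi_path xs ! k = P ! k \<and> Wl xs ! k = W ! k" if k: "k < m" for k
  proof -
    define D where "D = dst m P W k"
    define t where "t = int m - int k"
    have t1: "1 \<le> t" using k t_def by simp
    have I': "Inv (int m) t D" using lb_Inv[OF lb, of k] k t_def D_def by simp
    have vals: "\<And>q. q \<in> set D \<Longrightarrow> fst q > t \<and> (snd q = 0 \<or> snd q > t)" using Inv_vals[OF I'] by blast
    have D1: "dst m (Phi_path xs) (Wl xs) k = D" using DD k D_def by simp
    have D2: "dst m (Phi_path xs) (Wl xs) (Suc k) = dst m P W (Suc k)" using k by (intro DD) simp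
    have ab: "0 \<le> Wl xs ! k \<and> (Phi_path xs ! k \<longrightarrow> nat (Wl xs ! k) \<le> nopen D)
     \<and> (\<not> Phi_path xs ! k \<longrightarrow> nat (Wl xs ! k) < nopen D)"
      using alt_bounds[OF alt ev k] D1 by simp
    have lu: "0 \<le> W ! k \<and> nat (W ! k) \<le> nopen D" using lb_up[OF lb k] D_def by simp
    have E: "(if Phi_path xs ! k then ins (nat (Wl xs ! k)) (t, 0) D else cls (nat (Wl xs ! k)) t D)
        = (if P ! k then ins (nat (W ! k)) (t, 0) D else cls (nat (W ! k)) t D)"
    proof -
      have a1: "dst m (Phi_path xs) (Wl xs) (Suc k) = (if Phi_path xs ! k then ins (nat (Wl xs ! k)) (t, 0) D else cls (nat (Wl xs ! k)) t D)"
        using D1 t_def by simp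
      have a2: "dst m P W (Suc k) = (if P ! k then ins (nat (W ! k)) (t, 0) D else cls (nat (W ! k)) t D)"
        using D_def t_def by simp
      show ?thesis using a1 a2 D2 by (simp del: dst.simps)
    qed
    have pe: "Phi_path xs ! k = P ! k"
    proof (rule ccontr)
      assume ne: "Phi_path xs ! k \<noteq> P ! k"
      have "length (if Phi_path xs ! k then ins (nat (Wl xs ! k)) (t, 0) D else cls (nat (Wl xs ! k)) t D)
        \<noteq> length (if P ! k then ins (nat (W ! k)) (t, 0) D else cls (nat (W ! k)) t D)"
        using ne by (cases "P ! k") (auto simp: length_ins length_cls)
      then show False using E by simp
    qed
    have "nat (Wl xs ! k) = nat (W ! k)"
    proof (cases "P ! k")
      case True
      have "(t, 0) \<notin> set D" using vals by fastforce
      moreover have "ins (nat (Wl xs ! k)) (t, 0) D = ins (nat (W ! k)) (t, 0) D" using E pe True by simp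
      ultimately show ?thesis using ins_inj[of "(t,0)" D "nat (Wl xs ! k)" "nat (W ! k)"] ab lu pe True by simp
    next
      case False
      have "\<forall>q\<in>set D. snd q \<noteq> t" using vals t1 by fastforce
      moreover have "cls (nat (Wl xs ! k)) t D = cls (nat (W ! k)) t D" using E pe False by simp
      moreover have "nat (W ! k) < nopen D" using lb_down[OF lb k False] D_def by simp
      ultimately show ?thesis using cls_inj[of D t "nat (Wl xs ! k)" "nat (W ! k)"] ab pe False by simp
    qed
    moreover have "0 \<le> Wl xs ! k" "0 \<le> W ! k" using ab lu by auto
    ultimately have "Wl xs ! k = W ! k" by (metis nat_eq_iff2)
    then show ?thesis using pe by simp
  qed
  have "Phi_path xs = P" using eq F lx by (intro nth_equalityI) auto
  moreover have "Wl xs = W" using eq F lx by (intro nth_equalityI) auto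
  ultimately show ?thesis using alt Phi_eq by auto
qed

theorem theorem4p6:
  fixes n :: nat
  assumes "n \<ge> 1"
  shows "bij_betw Phi {xs. alt_perm (2 * n) xs} {PW. labeled_ballot (2 * n) 0 PW}
         \<and> B (2 * n) 0 = Euler_E (2 * n)"
proof -
  have ev: "even (2 * n)" by simp
  have bij: "bij_betw Phi {xs. alt_perm (2 * n) xs} {PW. labeled_ballot (2 * n) 0 PW}"
    unfolding bij_betw_def
  proof
    show "inj_on Phi {xs. alt_perm (2 * n) xs}"
      using alt_inj[OF _ _ ev] by (auto simp: inj_on_def)
    show "Phi ` {xs. alt_perm (2 * n) xs} = {PW. labeled_ballot (2 * n) 0 PW}"
    proof (intro set_eqI iffI)
      fix PW assume "PW \<in> Phi ` {xs. alt_perm (2 * n) xs}"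
      then show "PW \<in> {PW. labeled_ballot (2 * n) 0 PW}" using alt_image[OF _ ev] by auto
    next
      fix PW assume a: "PW \<in> {PW. labeled_ballot (2 * n) 0 PW}"
      obtain P W where pw: "PW = (P, W)" by fastforce
      have "labeled_ballot (2 * n) 0 (P, W)" using a pw by simp
      from lb_surj[OF this] obtain xs where "alt_perm (2 * n) xs" "Phi xs = (P, W)" by blast
      then show "PW \<in> Phi ` {xs. alt_perm (2 * n) xs}" using pw by force
    qed
  qed
  moreover have "B (2 * n) 0 = Euler_E (2 * n)"
    using bij_betw_same_card[OF bij] unfolding B_def Euler_E_def by simp
  ultimately show ?thesis by simp
qed


end
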